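(* Assume all $q_{ij}$ are roots of unity. Let $\mathbf{b}_1,\ldots,\mathbf{b}_n$ be a $\mathbb{Z}$-basis of the group $S$, and set $z_i=x^{\mathbf{b}_i}\in L$ for $i=1,\ldots,n$. The following are equivalent: (i) after reordering if necessary, $\mathbf{b}_1,\ldots,\mathbf{b}_n$ is a positive diagonal basis of $S$; (ii) the center $Z(L)$ of $L$ is a commutative Laurent series ring over $k$ in $z_1,\ldots,z_n$, i.e. $Z(L)$ consists exactly of the (well-defined) series $\sum_{m\in\mathbb{Z}^n}\mu_m z_1^{m_1}\cdots z_n^{m_n}$ with $\mu_m\in k$ and $\mu_m=0$ whenever $\min\{m_1,\ldots,m_n\}$ is sufficiently negative, and $Z(L)\cong k[[z_1^{\pm1},\ldots,z_n^{\pm1}]]$ via $z_i\mapsto z_i$; (iii) the center $Z(R)$ of $R$ is a commutative power series ring over $k$ in $z_1,\ldots,z_n$, i.e. $Z(R)$ consists exactly of the series $\sum_{m\in\mathbb{N}^n}\mu_m z_1^{m_1}\cdots z_n^{m_n}$, $\mu_m\in k$, and $Z(R)\cong k[[z_1,\ldots,z_n]]$.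
   Context: $k$ is an algebraically closed field, $n$ a positive integer, $q=(q_{ij})$ an $n\times n$ matrix over $k^\times$ with $q_{ii}=1$ and $q_{ij}=q_{ji}^{-1}$. $R=k_q[[x_1,\ldots,x_n]]$ is the $q$-commutative power series ring: the $k$-algebra of formal power series $\sum_{s\in\mathbb{N}^n}c_sx^s$ ($x^s=x_1^{s_1}\cdots x_n^{s_n}$) with multiplication determined by $x_ix_j=q_{ij}x_jx_i$. $L=k_q[[x_1^{\pm1},\ldots,x_n^{\pm1}]]$ is the Ore localization of $R$ at the multiplicative set generated by $x_1,\ldots,x_n$; its elements are series $\sum_{s\in\mathbb{Z}^n}c_sx^s$ with $c_s=0$ when $\min\{s_1,\ldots,s_n\}$ is sufficiently negative, and $x^s=x_1^{s_1}\cdots x_n^{s_n}$ for $s\in\mathbb{Z}^n$. Define $\sigma:\mathbb{Z}^n\times\mathbb{Z}^n\to k^\times$ by $\sigma(s,t)=\prod_{i,j=1}^n q_{ij}^{s_it_j}$ (so $x^sx^t=\sigma(s,t)x^tx^s$), and $S=\{s\in\mathbb{Z}^n:\sigma(s,t)=1\text{ for all }t\in\mathbb{Z}^n\}$, a free abelian subgroup of $\mathbb{Z}^n$ of rank $n$. A $\mathbb{Z}$-basis $\mathbf{b}_1,\ldots,\mathbf{b}_n$ of $S$ is positive diagonal if the $n\times n$ matrix whose $i$th row is $\mathbf{b}_i$ is diagonal with all diagonal entries positive. *)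

theory Defs
  imports "HOL-Computational_Algebra.Polynomial" "HOL-Combinatorics.Permutations"
begin

text \<open>Exponent vectors in Z^n are functions nat => int vanishing outside {..<n}.
  An element of L = k_q[[x_1^{+-1},...,x_n^{+-1}]] is represented by its coefficient
  function f :: (nat => int) => 'k, so that f = sum_s f(s) x^s.\<close>

definition zvec :: "nat \<Rightarrow> (nat \<Rightarrow> int) set" where
  "zvec n = {s. \<forall>i\<ge>n. s i = 0}"

text \<open>sigma(s,t) = prod_{i,j} q_ij^(s_i t_j), so that x^s x^t = sigma(s,t) x^t x^s.\<close>
definition qsigma :: "nat \<Rightarrow> (nat \<Rightarrow> nat \<Rightarrow> 'k::field) \<Rightarrow> (nat \<Rightarrow> int) \<Rightarrow> (nat \<Rightarrow> int) \<Rightarrow> 'k" where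
  "qsigma n q s t = (\<Prod>i<n. \<Prod>j<n. q i j powi (s i * t j))"

text \<open>The reordering scalar: x^s x^t = qeps(s,t) x^(s+t), where
  x^s = x_1^(s_1) ... x_n^(s_n).\<close>
definition qeps :: "nat \<Rightarrow> (nat \<Rightarrow> nat \<Rightarrow> 'k::field) \<Rightarrow> (nat \<Rightarrow> int) \<Rightarrow> (nat \<Rightarrow> int) \<Rightarrow> 'k" where
  "qeps n q s t = (\<Prod>i<n. \<Prod>j<n. if j < i then q i j powi (s i * t j) else 1)"

definition qS :: "nat \<Rightarrow> (nat \<Rightarrow> nat \<Rightarrow> 'k::field) \<Rightarrow> (nat \<Rightarrow> int) set" where
  "qS n q = {s \<in> zvec n. \<forall>t \<in> zvec n. qsigma n q s t = 1}"

definition laurent :: "nat \<Rightarrow> ((nat \<Rightarrow> int) \<Rightarrow> 'k::zero) set" where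
  "laurent n = {f. (\<forall>s. f s \<noteq> 0 \<longrightarrow> s \<in> zvec n) \<and>
                   (\<exists>N::int. \<forall>s. f s \<noteq> 0 \<longrightarrow> (\<forall>i<n. - N \<le> s i))}"

definition pseries :: "nat \<Rightarrow> ((nat \<Rightarrow> int) \<Rightarrow> 'k::zero) set" where
  "pseries n = {f \<in> laurent n. \<forall>s. f s \<noteq> 0 \<longrightarrow> (\<forall>i<n. 0 \<le> s i)}"

text \<open>Multiplication of L (the sum is finite for elements of L).\<close>
definition qmult :: "nat \<Rightarrow> (nat \<Rightarrow> nat \<Rightarrow> 'k::field)
    \<Rightarrow> ((nat \<Rightarrow> int) \<Rightarrow> 'k) \<Rightarrow> ((nat \<Rightarrow> int) \<Rightarrow> 'k) \<Rightarrow> ((nat \<Rightarrow> int) \<Rightarrow> 'k)" where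
  "qmult n q f g = (\<lambda>u. \<Sum>s\<in>{s. f s \<noteq> 0 \<and> g (u - s) \<noteq> 0}. f s * g (u - s) * qeps n q s (u - s))"

definition mono :: "(nat \<Rightarrow> int) \<Rightarrow> ((nat \<Rightarrow> int) \<Rightarrow> 'k::{zero,one})" where
  "mono s = (\<lambda>t. if t = s then 1 else 0)"

definition lone :: "(nat \<Rightarrow> int) \<Rightarrow> 'k::{zero,one}" where
  "lone = mono (\<lambda>_. 0)"

definition qcenter :: "nat \<Rightarrow> (nat \<Rightarrow> nat \<Rightarrow> 'k::field) \<Rightarrow> ((nat \<Rightarrow> int) \<Rightarrow> 'k) set
    \<Rightarrow> ((nat \<Rightarrow> int) \<Rightarrow> 'k) set" where
  "qcenter n q A = {f \<in> A. \<forall>g \<in> A. qmult n q f g = qmult n q g f}"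

definition linv :: "nat \<Rightarrow> (nat \<Rightarrow> nat \<Rightarrow> 'k::field) \<Rightarrow> ((nat \<Rightarrow> int) \<Rightarrow> 'k) \<Rightarrow> ((nat \<Rightarrow> int) \<Rightarrow> 'k)" where
  "linv n q f = (THE g. g \<in> laurent n \<and> qmult n q f g = lone \<and> qmult n q g f = lone)"

primrec npow :: "nat \<Rightarrow> (nat \<Rightarrow> nat \<Rightarrow> 'k::field) \<Rightarrow> ((nat \<Rightarrow> int) \<Rightarrow> 'k) \<Rightarrow> nat \<Rightarrow> ((nat \<Rightarrow> int) \<Rightarrow> 'k)" where
  "npow n q f 0 = lone"
| "npow n q f (Suc k) = qmult n q f (npow n q f k)"

definition ipow :: "nat \<Rightarrow> (nat \<Rightarrow> nat \<Rightarrow> 'k::field) \<Rightarrow> ((nat \<Rightarrow> int) \<Rightarrow> 'k) \<Rightarrow> int \<Rightarrow> ((nat \<Rightarrow> int) \<Rightarrow> 'k)" where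
  "ipow n q f k = (if 0 \<le> k then npow n q f (nat k) else npow n q (linv n q f) (nat (- k)))"

text \<open>zprod n q b m i = z_1^(m_1) ... z_i^(m_i) with z_j = x^(b_(j-1)) (0-based indices).\<close>
primrec zprod :: "nat \<Rightarrow> (nat \<Rightarrow> nat \<Rightarrow> 'k::field) \<Rightarrow> (nat \<Rightarrow> nat \<Rightarrow> int) \<Rightarrow> (nat \<Rightarrow> int) \<Rightarrow> nat
    \<Rightarrow> ((nat \<Rightarrow> int) \<Rightarrow> 'k)" where
  "zprod n q b m 0 = lone"
| "zprod n q b m (Suc i) = qmult n q (zprod n q b m i) (ipow n q (mono (b i)) (m i))"

text \<open>The series sum_m mu_m z^m, computed coefficientwise (each coefficient being a finite sum
  when the series is well defined).\<close>
definition zseries :: "nat \<Rightarrow> (nat \<Rightarrow> nat \<Rightarrow> 'k::field) \<Rightarrow> (nat \<Rightarrow> nat \<Rightarrow> int)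
    \<Rightarrow> ((nat \<Rightarrow> int) \<Rightarrow> 'k) \<Rightarrow> ((nat \<Rightarrow> int) \<Rightarrow> 'k)" where
  "zseries n q b mu = (\<lambda>u. \<Sum>m\<in>{m. mu m \<noteq> 0 \<and> zprod n q b m n u \<noteq> 0}. mu m * zprod n q b m n u)"

definition is_Zbasis :: "nat \<Rightarrow> (nat \<Rightarrow> nat \<Rightarrow> 'k::field) \<Rightarrow> (nat \<Rightarrow> nat \<Rightarrow> int) \<Rightarrow> bool" where
  "is_Zbasis n q b \<longleftrightarrow> (\<forall>i<n. b i \<in> qS n q) \<and>
     (\<forall>s \<in> qS n q. \<exists>!m. m \<in> zvec n \<and> s = (\<lambda>j. \<Sum>i<n. m i * b i j))"

definition pos_diag :: "nat \<Rightarrow> (nat \<Rightarrow> nat \<Rightarrow> int) \<Rightarrow> bool" where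
  "pos_diag n b \<longleftrightarrow> (\<forall>i<n. \<forall>j<n. (i = j \<longrightarrow> b i j > 0) \<and> (i \<noteq> j \<longrightarrow> b i j = 0))"

definition cmult :: "nat \<Rightarrow> ((nat \<Rightarrow> int) \<Rightarrow> 'k::field) \<Rightarrow> ((nat \<Rightarrow> int) \<Rightarrow> 'k) \<Rightarrow> ((nat \<Rightarrow> int) \<Rightarrow> 'k)" where
  "cmult n = qmult n (\<lambda>_ _. 1)"

end

theory Submission
  imports Defs "HOL-Library.Function_Algebras"
begin


definition cmono :: "'k::zero \<Rightarrow> (nat\<Rightarrow>int) \<Rightarrow> ((nat\<Rightarrow>int) \<Rightarrow> 'k)" where
  "cmono c s = (\<lambda>t. if t = s then c else 0)"

lemma mono_cmono: "mono s = cmono 1 s" by (simp add: mono_def cmono_def)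
lemma lone_cmono: "lone = cmono 1 0" by (simp add: lone_def mono_cmono zero_fun_def)

lemma qmult_cmono_left: "qmult n q (cmono c s) g = (\<lambda>u. c * g (u - s) * qeps n q s (u - s))"
proof
  fix u
  have "{s'. cmono c s s' \<noteq> 0 \<and> g (u - s') \<noteq> 0} = (if c \<noteq> 0 \<and> g (u-s) \<noteq> 0 then {s} else {})"
    by (auto simp: cmono_def)
  then show "qmult n q (cmono c s) g u = c * g (u - s) * qeps n q s (u - s)"
    by (auto simp: qmult_def cmono_def)
qed

lemma qmult_cmono_right: "qmult n q f (cmono c t) = (\<lambda>u. f (u - t) * c * qeps n q (u - t) t)"
proof
  fix u
  have "{s'. f s' \<noteq> 0 \<and> cmono c t (u - s') \<noteq> 0} = (if c \<noteq> 0 \<and> f (u-t) \<noteq> 0 then {u - t} else {})"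
    by (auto simp: cmono_def)
  then show "qmult n q f (cmono c t) u = f (u - t) * c * qeps n q (u - t) t"
    by (auto simp: qmult_def cmono_def)
qed

lemma qmult_cmono_cmono: "qmult n q (cmono c s) (cmono d t) = cmono (c * d * qeps n q s t) (s + t)"
  unfolding qmult_cmono_left by (rule ext) (auto simp: cmono_def algebra_simps)

lemma qeps_nz: "\<forall>i<n. \<forall>j<n. q i j \<noteq> 0 \<Longrightarrow> qeps n q s t \<noteq> 0"
  by (simp add: qeps_def prod_zero_iff)

definition Wp :: "nat \<Rightarrow> (nat \<Rightarrow> nat \<Rightarrow> 'k::field) \<Rightarrow> (nat \<Rightarrow> int) \<Rightarrow> bool" where
  "Wp n q s \<longleftrightarrow> (\<forall>a<n. \<forall>c<n. q a c powi s a = 1 \<and> q c a powi s a = 1)"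

lemma Wp_qeps1: "Wp n q s \<Longrightarrow> qeps n q s t = 1"
  unfolding qeps_def Wp_def by (intro prod.neutral ballI) (simp add: power_int_mult)

lemma Wp_qeps2: "Wp n q s \<Longrightarrow> qeps n q t s = 1"
  unfolding qeps_def Wp_def
proof (intro prod.neutral ballI)
  fix i j assume W: "\<forall>a<n. \<forall>c<n. q a c powi s a = 1 \<and> q c a powi s a = 1" and i: "i \<in> {..<n}" and j: "j \<in> {..<n}"
  have "q i j powi (t i * s j) = (q i j powi s j) powi t i" by (simp add: power_int_mult mult.commute)
  also have "\<dots> = 1" using W i j by simp
  finally show "(if j < i then q i j powi (t i * s j) else 1) = 1" by simp
qed

lemma Wp_add: "\<forall>i<n. \<forall>j<n. q i j \<noteq> 0 \<Longrightarrow> Wp n q s \<Longrightarrow> Wp n q t \<Longrightarrow> Wp n q (s + t)"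
  unfolding Wp_def by (simp add: power_int_add)

lemma Wp_smult: "Wp n q s \<Longrightarrow> Wp n q (\<lambda>j. k * s j)"
  unfolding Wp_def by (simp add: power_int_mult mult.commute[of k])

lemma Wp_zero: "Wp n q (\<lambda>j. 0)" unfolding Wp_def by simp

definition plin :: "(nat \<Rightarrow> nat \<Rightarrow> int) \<Rightarrow> (nat \<Rightarrow> int) \<Rightarrow> nat \<Rightarrow> (nat \<Rightarrow> int)" where
  "plin b m i = (\<lambda>j. \<Sum>k<i. m k * b k j)"

lemma plin_Suc: "plin b m (Suc i) = plin b m i + (\<lambda>j. m i * b i j)"
  by (simp add: plin_def fun_eq_iff)

lemma plin_0: "plin b m 0 = 0" by (simp add: plin_def fun_eq_iff)

lemma Wp_plin: "\<forall>i<n. \<forall>j<n. q i j \<noteq> 0 \<Longrightarrow> \<forall>k<i. Wp n q (b k) \<Longrightarrow> Wp n q (plin b m i)"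
proof (induction i)
  case 0 then show ?case using Wp_zero by (simp add: plin_def)
next
  case (Suc i)
  then show ?case unfolding plin_Suc by (intro Wp_add Wp_smult) auto
qed

lemma qsigma_add_right: "\<forall>i<n. \<forall>j<n. q i j \<noteq> 0 \<Longrightarrow> qsigma n q s (t + t') = qsigma n q s t * qsigma n q s t'"
  unfolding qsigma_def by (simp add: distrib_left power_int_add prod.distrib)

lemma qsigma_add_left: "\<forall>i<n. \<forall>j<n. q i j \<noteq> 0 \<Longrightarrow> qsigma n q (s + s') t = qsigma n q s t * qsigma n q s' t"
  unfolding qsigma_def by (simp add: distrib_right power_int_add prod.distrib)

lemma qsigma_smult: "qsigma n q (\<lambda>j. k * s j) t = qsigma n q s (\<lambda>j. k * t j)"
  unfolding qsigma_def by (simp add: algebra_simps)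



lemma qeps_swap:
  assumes q_nz: "\<forall>i<n. \<forall>j<n. q i j \<noteq> 0"
    and q_diag: "\<forall>i<n. q i i = 1"
    and q_inv: "\<forall>i<n. \<forall>j<n. q i j = inverse (q j i)"
  shows "qeps n q s t = qsigma n q s t * qeps n q t s"
proof -
  define A where "A i j = q i j powi (s i * t j)" for i j
  have split: "A i j = (if j < i then A i j else 1) * (if i < j then A i j else 1)" if "i < n" "j < n" for i j
    using q_diag that by (cases "i = j") (auto simp: A_def)
  have "qsigma n q s t = (\<Prod>i<n. \<Prod>j<n. (if j < i then A i j else 1) * (if i < j then A i j else 1))"
    unfolding qsigma_def A_def[symmetric] apply (intro prod.cong refl) apply (rule split) by auto
  also have "\<dots> = qeps n q s t * (\<Prod>i<n. \<Prod>j<n. (if i < j then A i j else 1))"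
    unfolding prod.distrib qeps_def A_def ..
  also have "(\<Prod>i<n. \<Prod>j<n. (if i < j then A i j else 1)) = (\<Prod>i<n. \<Prod>j<n. (if i < j then inverse (q j i powi (t j * s i)) else 1))"
  proof (intro prod.cong refl)
    fix i j assume "i \<in> {..<n}" "j \<in> {..<n}"
    then have "q i j = inverse (q j i)" using q_inv by blast
    then show "(if i < j then A i j else 1) = (if i < j then inverse (q j i powi (t j * s i)) else 1)"
      by (simp add: A_def power_int_inverse mult.commute)
  qed
  also have "\<dots> = (\<Prod>j<n. \<Prod>i<n. (if i < j then inverse (q j i powi (t j * s i)) else 1))"
    by (rule prod.swap)
  also have "\<dots> = (\<Prod>j<n. \<Prod>i<n. inverse (if i < j then (q j i powi (t j * s i)) else 1))"
    by (intro prod.cong refl) auto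
  also have "\<dots> = inverse (qeps n q t s)"
    unfolding qeps_def prod_inversef[symmetric, unfolded comp_def] ..
  finally have "qsigma n q s t = qeps n q s t * inverse (qeps n q t s)" .
  then show ?thesis using qeps_nz[OF q_nz, of t s] by simp
qed

lemma qsigma_eq_1_neg:
  assumes q_nz: "\<forall>i<n. \<forall>j<n. q i j \<noteq> 0"
    and pos: "\<And>t. t \<in> zvec n \<Longrightarrow> (\<forall>i. 0 \<le> t i) \<Longrightarrow> qsigma n q s t = 1"
    and t: "t \<in> zvec n"
  shows "qsigma n q s t = 1"
proof -
  define tp where "tp = (\<lambda>j. max (t j) 0)"
  define tn where "tn = (\<lambda>j. max (- t j) 0)"
  have "tp = t + tn" by (auto simp: tp_def tn_def fun_eq_iff)
  have "tp \<in> zvec n" "tn \<in> zvec n" using t by (auto simp: zvec_def tp_def tn_def)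
  then have "qsigma n q s tp = 1" "qsigma n q s tn = 1" using pos by (auto simp: tp_def tn_def)
  with \<open>tp = t + tn\<close> qsigma_add_right[OF q_nz, of s t tn] show ?thesis by simp
qed

lemma linv_mono:
  assumes q_nz: "\<forall>i<n. \<forall>j<n. q i j \<noteq> 0" and s: "s \<in> zvec n"
  shows "linv n q (mono s) = cmono (inverse (qeps n q s (- s))) (- s)"
  unfolding linv_def
proof (rule the_equality)
  let ?g = "cmono (inverse (qeps n q s (- s))) (- s) :: (nat \<Rightarrow> int) \<Rightarrow> 'a"
  have ne: "qeps n q s (- s) \<noteq> 0" using qeps_nz[OF q_nz] .
  have sym: "qeps n q (- s) s = qeps n q s (- s)" proof -
    have "\<And>i j. (- s i) * s j = s i * (- s j)" by simp
    then show ?thesis by (simp only: qeps_def uminus_apply)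
  qed
  have "?g \<in> laurent n"
    unfolding laurent_def
  proof (intro CollectI conjI allI impI)
    fix x assume "?g x \<noteq> 0" then show "x \<in> zvec n" using s by (auto simp: cmono_def zvec_def split: if_splits)
  next
    show "\<exists>N. \<forall>x. ?g x \<noteq> 0 \<longrightarrow> (\<forall>i<n. - N \<le> x i)"
    proof (intro exI[of _ "\<Sum>i<n. \<bar>s i\<bar>"] allI impI)
      fix x i assume "?g x \<noteq> 0" "i < n"
      then have "x = - s" by (auto simp: cmono_def split: if_splits)
      moreover have "\<bar>s i\<bar> \<le> (\<Sum>i<n. \<bar>s i\<bar>)" using \<open>i < n\<close> by (intro member_le_sum) auto
      ultimately show "- (\<Sum>i<n. \<bar>s i\<bar>) \<le> x i" by auto
    qed
  qed
  moreover have "qmult n q (mono s) ?g = lone"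
    unfolding mono_cmono qmult_cmono_cmono lone_cmono using ne by simp
  moreover have "qmult n q ?g (mono s) = lone"
    unfolding mono_cmono qmult_cmono_cmono lone_cmono using ne sym by simp
  ultimately show "?g \<in> laurent n \<and> qmult n q (mono s) ?g = lone \<and> qmult n q ?g (mono s) = lone" by blast
next
  fix g :: "(nat \<Rightarrow> int) \<Rightarrow> 'a"
  assume "g \<in> laurent n \<and> qmult n q (mono s) g = lone \<and> qmult n q g (mono s) = lone"
  then have hh: "(\<lambda>u. 1 * g (u - s) * qeps n q s (u - s)) = lone"
    by (simp only: mono_cmono qmult_cmono_left)
  have h: "g (u - s) * qeps n q s (u - s) = lone u" for u
    using fun_cong[OF hh, of u] by simp
  show "g = cmono (inverse (qeps n q s (- s))) (- s)"
  proof
    fix v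
    have "g v * qeps n q s v = lone (v + s)" using h[of "v + s"] by simp
    moreover have "v + s = 0 \<longleftrightarrow> v = - s" by (metis add.commute add_eq_0_iff2) 
    ultimately show "g v = cmono (inverse (qeps n q s (- s))) (- s) v"
      using qeps_nz[OF q_nz, of s v]
      by (auto simp: lone_cmono cmono_def field_simps split: if_splits)
  qed
qed

lemma npow_cmono:
  assumes q_nz: "\<forall>i<n. \<forall>j<n. q i j \<noteq> 0"
  shows "\<exists>c. npow n q (cmono a s) k = cmono c (\<lambda>j. int k * s j) \<and> (a \<noteq> 0 \<longrightarrow> c \<noteq> 0) \<and> (a = 1 \<and> Wp n q s \<longrightarrow> c = 1)"
proof (induction k)
  case 0 then show ?case by (auto simp: lone_cmono zero_fun_def)
next
  case (Suc k)
  then obtain c where c: "npow n q (cmono a s) k = cmono c (\<lambda>j. int k * s j)" "a \<noteq> 0 \<longrightarrow> c \<noteq> 0" "a = 1 \<and> Wp n q s \<longrightarrow> c = 1" by blast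
  have e: "s + (\<lambda>j. int k * s j) = (\<lambda>j. int (Suc k) * s j)" by (auto simp: fun_eq_iff algebra_simps)
  show ?case
    using c qeps_nz[OF q_nz, of s "\<lambda>j. int k * s j"] Wp_qeps1[of n q s]
    by (intro exI[of _ "a * c * qeps n q s (\<lambda>j. int k * s j)"]) (simp add: qmult_cmono_cmono e)
qed

lemma ipow_mono:
  assumes q_nz: "\<forall>i<n. \<forall>j<n. q i j \<noteq> 0" and s: "s \<in> zvec n"
  shows "\<exists>c. ipow n q (mono s) k = cmono c (\<lambda>j. k * s j) \<and> c \<noteq> 0 \<and> (Wp n q s \<longrightarrow> c = 1)"
proof (cases "0 \<le> k")
  case True
  then show ?thesis using npow_cmono[OF q_nz, of 1 s "nat k"] by (simp add: ipow_def mono_cmono)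
next
  case False
  let ?a = "inverse (qeps n q s (- s))"
  have a: "?a \<noteq> 0" using qeps_nz[OF q_nz] by simp
  have Wm: "Wp n q s \<Longrightarrow> Wp n q (- s) \<and> ?a = 1"
    using Wp_smult[of n q s "-1"] Wp_qeps1[of n q s] by (simp add: fun_Compl_def)
  obtain c where c: "npow n q (cmono ?a (-s)) (nat (-k)) = cmono c (\<lambda>j. int (nat (-k)) * (-s) j)"
    "?a \<noteq> 0 \<longrightarrow> c \<noteq> 0" "?a = 1 \<and> Wp n q (-s) \<longrightarrow> c = 1"
    using npow_cmono[OF q_nz, of ?a "-s" "nat (-k)"] by blast
  have e: "(\<lambda>j. int (nat (-k)) * (-s) j) = (\<lambda>j. k * s j)" using False by auto
  show ?thesis using False c a Wm unfolding ipow_def linv_mono[OF q_nz s] e by auto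
qed

lemma zprod_cmono:
  assumes q_nz: "\<forall>i<n. \<forall>j<n. q i j \<noteq> 0" and bz: "\<forall>k<i. b k \<in> zvec n"
  shows "\<exists>c. zprod n q b m i = cmono c (plin b m i) \<and> c \<noteq> 0 \<and> ((\<forall>k<i. Wp n q (b k)) \<longrightarrow> c = 1)"
  using bz
proof (induction i)
  case 0 then show ?case by (auto simp: lone_cmono plin_0 zero_fun_def)
next
  case (Suc i)
  then obtain c where c: "zprod n q b m i = cmono c (plin b m i)" "c \<noteq> 0" "(\<forall>k<i. Wp n q (b k)) \<longrightarrow> c = 1" by auto
  obtain c' where c': "ipow n q (mono (b i)) (m i) = cmono c' (\<lambda>j. m i * b i j)" "c' \<noteq> 0" "Wp n q (b i) \<longrightarrow> c' = 1"
    using ipow_mono[OF q_nz, of "b i" "m i"] Suc.prems by auto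
  define e where "e = qeps n q (plin b m i) (\<lambda>j. m i * b i j)"
  have z: "zprod n q b m (Suc i) = cmono (c * c' * e) (plin b m (Suc i))"
    using c c' by (simp add: qmult_cmono_cmono plin_Suc e_def)
  have "e \<noteq> 0" unfolding e_def by (rule qeps_nz[OF q_nz])
  moreover have "(\<forall>k<Suc i. Wp n q (b k)) \<longrightarrow> c * c' * e = 1"
  proof
    assume W: "\<forall>k<Suc i. Wp n q (b k)"
    then have "Wp n q (plin b m i)" using Wp_plin[OF q_nz, of i b m] by auto
    then have "e = 1" unfolding e_def by (rule Wp_qeps1)
    then show "c * c' * e = 1" using W c c' by auto
  qed
  ultimately show ?case using z c c' by auto
qed



locale qs =
  fixes n :: nat and q :: "nat \<Rightarrow> nat \<Rightarrow> 'k::field" and b :: "nat \<Rightarrow> nat \<Rightarrow> int"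
  assumes q_nz: "\<forall>i<n. \<forall>j<n. q i j \<noteq> 0"
    and q_diag: "\<forall>i<n. q i i = 1"
    and q_inv: "\<forall>i<n. \<forall>j<n. q i j = inverse (q j i)"
    and basis: "is_Zbasis n q b"
begin

abbreviation lin :: "(nat \<Rightarrow> int) \<Rightarrow> (nat \<Rightarrow> int)" where "lin m \<equiv> plin b m n"

lemma bS: "i < n \<Longrightarrow> b i \<in> qS n q" using basis by (auto simp: is_Zbasis_def)
lemma S_zvec: "s \<in> qS n q \<Longrightarrow> s \<in> zvec n" by (simp add: qS_def)
lemma bz: "i < n \<Longrightarrow> b i \<in> zvec n" using bS S_zvec by blast

lemma lin_zvec: "lin m \<in> zvec n"
  using bz by (auto simp: zvec_def plin_def)

lemma lin_diff: "lin (m - a) = lin m - lin a"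
  by (simp add: plin_def fun_eq_iff left_diff_distrib sum_subtractf)
lemma lin_add: "lin (m + a) = lin m + lin a"
  by (simp add: plin_def fun_eq_iff distrib_right sum.distrib)
lemma lin_smult: "lin (\<lambda>i. k * m i) = (\<lambda>j. k * lin m j)"
  by (simp add: plin_def fun_eq_iff sum_distrib_left mult.assoc)
lemma lin_e: "i < n \<Longrightarrow> lin (\<lambda>c. if c = i then k else 0) = (\<lambda>j. k * b i j)"
  by (simp add: plin_def fun_eq_iff if_distrib[of "\<lambda>x. x * _"] cong: if_cong)

lemma zvec_diff: "s \<in> zvec n \<Longrightarrow> t \<in> zvec n \<Longrightarrow> s - t \<in> zvec n" by (simp add: zvec_def)
lemma zvec_add: "s \<in> zvec n \<Longrightarrow> t \<in> zvec n \<Longrightarrow> s + t \<in> zvec n" by (simp add: zvec_def)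
lemma zvec_smult: "s \<in> zvec n \<Longrightarrow> (\<lambda>j. k * s j) \<in> zvec n" by (simp add: zvec_def)

lemma qsigma_zero: "qsigma n q 0 t = 1" by (simp add: qsigma_def)

lemma plin_S: "i \<le> n \<Longrightarrow> plin b m i \<in> qS n q"
proof (induction i)
  case 0 then show ?case by (simp add: plin_def qS_def zvec_def qsigma_def)
next
  case (Suc i)
  then have p: "plin b m i \<in> qS n q" by simp
  have bi: "b i \<in> qS n q" using bS Suc.prems by simp
  have "plin b m (Suc i) \<in> zvec n"
    unfolding plin_Suc using p bi by (intro zvec_add zvec_smult S_zvec)
  moreover have "qsigma n q (plin b m (Suc i)) t = 1" if t: "t \<in> zvec n" for t
  proof -
    have "qsigma n q (\<lambda>j. m i * b i j) t = qsigma n q (b i) (\<lambda>j. m i * t j)" by (rule qsigma_smult)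
    also have "\<dots> = 1" using bi zvec_smult[OF t] by (auto simp: qS_def)
    finally show ?thesis using p t unfolding plin_Suc qsigma_add_left[OF q_nz] by (auto simp: qS_def)
  qed
  ultimately show ?case by (simp add: qS_def)
qed

lemma lin_S: "lin m \<in> qS n q" by (rule plin_S) simp

lemma lin_inj: "inj_on lin (zvec n)"
proof (rule inj_onI)
  fix m m' assume m: "m \<in> zvec n" and m': "m' \<in> zvec n" and e: "lin m = lin m'"
  have "\<exists>!x. x \<in> zvec n \<and> lin m = (\<lambda>j. \<Sum>i<n. x i * b i j)" using basis lin_S by (auto simp: is_Zbasis_def)
  then show "m = m'" using m m' e unfolding plin_def by blast
qed

lemma lin_onto: "s \<in> qS n q \<Longrightarrow> \<exists>m\<in>zvec n. s = lin m"
  using basis unfolding is_Zbasis_def plin_def by blast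

definition zc :: "(nat \<Rightarrow> int) \<Rightarrow> 'k" where "zc m = zprod n q b m n (lin m)"

lemma zprod_eq: "zprod n q b m n = cmono (zc m) (lin m)" "zc m \<noteq> 0" "(\<forall>k<n. Wp n q (b k)) \<Longrightarrow> zc m = 1"
proof -
  obtain c where c: "zprod n q b m n = cmono c (lin m)" "c \<noteq> 0" "(\<forall>k<n. Wp n q (b k)) \<longrightarrow> c = 1"
    using zprod_cmono[OF q_nz, of n b m] bz by auto
  have "zc m = c" using c by (simp add: zc_def cmono_def)
  then show "zprod n q b m n = cmono (zc m) (lin m)" "zc m \<noteq> 0" "(\<forall>k<n. Wp n q (b k)) \<Longrightarrow> zc m = 1"
    using c by auto
qed

lemma sum_sub_singleton: "X \<subseteq> {x} \<Longrightarrow> (x \<notin> X \<Longrightarrow> g x = 0) \<Longrightarrow> sum g X = g x"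
  by (cases "X = {}") (auto simp: subset_singleton_iff)

lemma zs_a:
  assumes mu: "\<forall>m. \<mu> m \<noteq> 0 \<longrightarrow> m \<in> zvec n" and m: "m \<in> zvec n"
  shows "zseries n q b \<mu> (lin m) = \<mu> m * zc m"
proof -
  let ?X = "{m'. \<mu> m' \<noteq> 0 \<and> zprod n q b m' n (lin m) \<noteq> 0}"
  have "?X \<subseteq> {m}"
  proof
    fix m' assume "m' \<in> ?X"
    then have "\<mu> m' \<noteq> 0" "lin m' = lin m" by (auto simp: zprod_eq cmono_def split: if_splits)
    then show "m' \<in> {m}" using mu m lin_inj by (auto dest: inj_onD)
  qed
  moreover have "\<mu> m * zprod n q b m n (lin m) = \<mu> m * zc m" by (simp add: zprod_eq cmono_def)
  ultimately show ?thesis unfolding zseries_def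
    by (subst sum_sub_singleton[of _ m]) auto
qed

lemma zs_b:
  assumes mu: "\<forall>m. \<mu> m \<noteq> 0 \<longrightarrow> m \<in> zvec n" and u: "\<forall>m\<in>zvec n. lin m \<noteq> u"
  shows "zseries n q b \<mu> u = 0"
proof -
  have X: "{m'. \<mu> m' \<noteq> 0 \<and> zprod n q b m' n u \<noteq> 0} = {}"
    using mu u by (auto simp: zprod_eq cmono_def split: if_splits)
  show ?thesis unfolding zseries_def X by simp
qed

lemma C2:
  assumes f: "\<forall>s. f s \<noteq> 0 \<longrightarrow> Wp n q s"
  shows "qmult n q f g = qmult n q g f"
proof
  fix u
  let ?X = "{s. f s \<noteq> 0 \<and> g (u - s) \<noteq> 0}"
  let ?Y = "{s. g s \<noteq> 0 \<and> f (u - s) \<noteq> 0}"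
  have f1: "qeps n q s t = 1" if "f s \<noteq> 0" for s t using f that by (simp add: Wp_qeps1)
  have f2: "qeps n q t s = 1" if "f s \<noteq> 0" for s t using f that by (simp add: Wp_qeps2)
  have "qmult n q f g u = (\<Sum>s\<in>?X. f s * g (u - s))"
    unfolding qmult_def by (intro sum.cong refl) (simp add: f1)
  also have "\<dots> = (\<Sum>s\<in>?Y. g s * f (u - s))"
    by (rule sum.reindex_bij_witness[of _ "\<lambda>s. u - s" "\<lambda>s. u - s"]) (auto simp: mult.commute)
  also have "\<dots> = qmult n q g f u"
    unfolding qmult_def by (intro sum.cong refl) (simp add: f2)
  finally show "qmult n q f g u = qmult n q g f u" .
qed

lemma C1:
  assumes A: "A \<subseteq> laurent n" and mA: "\<And>t. t \<in> zvec n \<Longrightarrow> (\<forall>i. 0 \<le> t i) \<Longrightarrow> mono t \<in> A"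
    and f: "f \<in> qcenter n q A" and s: "f s \<noteq> 0"
  shows "s \<in> qS n q"
proof -
  have fA: "f \<in> laurent n" using f A by (auto simp: qcenter_def)
  then have sz: "s \<in> zvec n" using s by (auto simp: laurent_def)
  have "qsigma n q s t = 1" if t: "t \<in> zvec n" for t
  proof (rule qsigma_eq_1_neg[OF q_nz _ t])
    fix t assume t: "t \<in> zvec n" and tp: "\<forall>i. 0 \<le> t i"
    then have "qmult n q f (mono t) = qmult n q (mono t) f" using f mA by (auto simp: qcenter_def)
    then have "qmult n q f (mono t) (s + t) = qmult n q (mono t) f (s + t)" by simp
    then have "f s * qeps n q s t = f s * qeps n q t s"
      by (simp add: mono_cmono qmult_cmono_left qmult_cmono_right)
    then have "qeps n q s t = qeps n q t s" using s by simp
    moreover have "qeps n q s t = qsigma n q s t * qeps n q t s" by (rule qeps_swap[OF q_nz q_diag q_inv])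
    ultimately have "1 * qeps n q t s = qsigma n q s t * qeps n q t s" by simp
    then show "qsigma n q s t = 1"
      using qeps_nz[OF q_nz, of t s] by (metis mult_right_cancel)
  qed
  then show ?thesis using sz by (simp add: qS_def)
qed

lemma mono_laurent: "t \<in> zvec n \<Longrightarrow> (\<forall>i. 0 \<le> t i) \<Longrightarrow> mono t \<in> pseries n"
  by (auto simp: pseries_def laurent_def mono_def intro!: exI[of _ 0])

lemma pseries_laurent: "pseries n \<subseteq> laurent n" by (auto simp: pseries_def)

end


lemma qeps_one: "qeps n (\<lambda>_ _. 1::'k::field) s t = 1" unfolding qeps_def by (intro prod.neutral ballI) simp

context qs
begin

lemma cmult_supp:
  assumes mu: "\<forall>m. \<mu> m \<noteq> 0 \<longrightarrow> m \<in> zvec n" and nu: "\<forall>m. \<nu> m \<noteq> 0 \<longrightarrow> m \<in> zvec n"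
    and c: "cmult n \<mu> \<nu> m \<noteq> 0"
  shows "m \<in> zvec n"
proof -
  have "{a. \<mu> a \<noteq> 0 \<and> \<nu> (m - a) \<noteq> 0} \<noteq> {}"
  proof
    assume X: "{a. \<mu> a \<noteq> 0 \<and> \<nu> (m - a) \<noteq> 0} = {}"
    have "cmult n \<mu> \<nu> m = 0" unfolding cmult_def qmult_def X by simp
    with c show False by simp
  qed
  then obtain a where "\<mu> a \<noteq> 0" "\<nu> (m - a) \<noteq> 0" by auto
  then have "a \<in> zvec n" "m - a \<in> zvec n" using mu nu by auto
  then have "a + (m - a) \<in> zvec n" by (rule zvec_add)
  then show ?thesis by simp
qed

end

locale qsd = qs n q b for n q b +
  fixes p :: "nat \<Rightarrow> nat"
  assumes perm: "p permutes {..<n}" and pd: "pos_diag n (\<lambda>i. b (p i))"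
begin

lemma p_lt: "a < n \<Longrightarrow> p a < n" using permutes_in_image[OF perm] by simp
lemma p_onto: "k < n \<Longrightarrow> \<exists>a<n. p a = k"
  by (metis imageE lessThan_iff permutes_image[OF perm])
lemma bd0: "a < n \<Longrightarrow> c < n \<Longrightarrow> c \<noteq> a \<Longrightarrow> b (p a) c = 0" using pd by (auto simp: pos_diag_def)
lemma bdpos: "a < n \<Longrightarrow> b (p a) a > 0" using pd by (auto simp: pos_diag_def)

lemma sigma_delta:
  assumes a: "a < n" and c: "c < n" and s0: "\<forall>i<n. i \<noteq> a \<longrightarrow> s i = 0"
  shows "qsigma n q s (\<lambda>j. if j = c then 1 else 0) = q a c powi s a"
proof -
  have e: "\<forall>i\<in>{..<n}. \<forall>j\<in>{..<n}. q i j powi (s i * (if j = c then 1 else 0)) = (if i = a then (if j = c then q a c powi s a else 1) else 1)"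
    using s0 by auto
  have "qsigma n q s (\<lambda>j. if j = c then 1 else 0) = (\<Prod>i<n. \<Prod>j<n. (if i = a then (if j = c then q a c powi s a else 1) else 1))"
    unfolding qsigma_def by (intro prod.cong refl) (use e in blast)
  also have "\<dots> = (\<Prod>i<n. (if i = a then (\<Prod>j<n. (if j = c then q a c powi s a else 1)) else 1))"
    by (intro prod.cong refl) auto
  also have "\<dots> = q a c powi s a" using a c by simp
  finally show ?thesis .
qed

lemma Wb: assumes k: "k < n" shows "Wp n q (b k)"
proof -
  obtain a where a: "a < n" "p a = k" using p_onto[OF k] by blast
  have s0: "\<forall>i<n. i \<noteq> a \<longrightarrow> b k i = 0" using bd0 a by auto
  have h: "q a c powi b k a = 1" if c: "c < n" for c
  proof -
    have "(\<lambda>j. if j = c then 1 else 0) \<in> zvec n" using c by (auto simp: zvec_def)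
    then have "qsigma n q (b k) (\<lambda>j. if j = c then 1 else 0) = 1" using bS[OF k] by (auto simp: qS_def)
    then show ?thesis using sigma_delta[OF a(1) c s0] by simp
  qed
  show ?thesis unfolding Wp_def
  proof (intro allI impI conjI)
    fix a' c assume a': "a' < n" and c: "c < n"
    show "q a' c powi b k a' = 1"
    proof (cases "a' = a")
      case True then show ?thesis using h c by simp
    next
      case False then show ?thesis using s0 a' by simp
    qed
    show "q c a' powi b k a' = 1"
    proof (cases "a' = a")
      case True
      have "q c a = inverse (q a c)" using q_inv c a(1) by blast
      then show ?thesis using h c True by (simp add: power_int_inverse)
    next
      case False then show ?thesis using s0 a' by simp
    qed
  qed
qed

lemma allW: "\<forall>k<n. Wp n q (b k)" using Wb by blast
lemma zc1: "zc m = 1" using zprod_eq(3) allW by blast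
lemma Wlin: "Wp n q (lin m)" using Wp_plin[OF q_nz] allW by blast

definition d :: "nat \<Rightarrow> int" where "d j = b (p j) j"
lemma dpos: "j < n \<Longrightarrow> d j > 0" using bdpos by (simp add: d_def)

lemma lin_formula: assumes j: "j < n" shows "lin m j = m (p j) * d j"
proof -
  have "lin m j = (\<Sum>i<n. m i * b i j)" by (simp add: plin_def)
  also have "\<dots> = (\<Sum>a<n. m (p a) * b (p a) j)"
    using sum.permute[OF perm, of "\<lambda>i. m i * b i j"] by (simp add: comp_def)
  also have "\<dots> = (\<Sum>a<n. if a = j then m (p j) * d j else 0)"
    using bd0 j by (intro sum.cong refl) (auto simp: d_def)
  also have "\<dots> = m (p j) * d j" using j by simp
  finally show ?thesis .
qed

lemma zs1: "\<forall>m. \<mu> m \<noteq> 0 \<longrightarrow> m \<in> zvec n \<Longrightarrow> m \<in> zvec n \<Longrightarrow> zseries n q b \<mu> (lin m) = \<mu> m"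
  using zs_a zc1 by simp

lemma zs_supp:
  assumes mu: "\<forall>m. \<mu> m \<noteq> 0 \<longrightarrow> m \<in> zvec n" and u: "zseries n q b \<mu> u \<noteq> 0"
  shows "\<exists>m\<in>zvec n. u = lin m \<and> \<mu> m \<noteq> 0"
proof -
  obtain m where m: "m \<in> zvec n" "lin m = u" using zs_b[OF mu] u by blast
  then show ?thesis using zs1[OF mu m(1)] u by auto
qed

definition M :: int where "M = (\<Sum>j<n. d j)"
lemma d_le_M: "j < n \<Longrightarrow> d j \<le> M"
  unfolding M_def using dpos by (intro member_le_sum) (auto intro: less_imp_le)

lemma lin_lb:
  assumes N: "0 \<le> N" and m: "\<forall>i<n. -N \<le> m i" and j: "j < n"
  shows "-(N * M) \<le> lin m j"
proof -
  have "-N \<le> m (p j)" using m p_lt j by auto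
  then have "-N * d j \<le> m (p j) * d j" using dpos[OF j] by (intro mult_right_mono) auto
  moreover have "-(N * M) \<le> -N * d j" using d_le_M[OF j] N by (simp add: mult_left_mono)
  ultimately show ?thesis using lin_formula[OF j] by simp
qed

lemma lin_nonneg: "\<forall>i<n. 0 \<le> m i \<Longrightarrow> j < n \<Longrightarrow> 0 \<le> lin m j"
  using lin_formula dpos p_lt by (simp add: less_imp_le)

lemma lin_lb_rev:
  assumes N: "0 \<le> N" and l: "\<forall>j<n. -N \<le> lin m j" and i: "i < n"
  shows "-N \<le> m i"
proof -
  obtain a where a: "a < n" "p a = i" using p_onto[OF i] by blast
  have "-N \<le> m i * d a" using l a lin_formula by auto
  show ?thesis
  proof (cases "0 \<le> m i")
    case True then show ?thesis using N by simp
  next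
    case False
    then have "m i * d a \<le> m i * 1" using dpos[OF a(1)] by (intro mult_left_mono_neg) auto
    then show ?thesis using \<open>-N \<le> m i * d a\<close> by simp
  qed
qed

lemma lin_nonneg_rev:
  assumes l: "\<forall>j<n. 0 \<le> lin m j" and i: "i < n"
  shows "0 \<le> m i"
proof -
  obtain a where a: "a < n" "p a = i" using p_onto[OF i] by blast
  have "0 \<le> m i * d a" using l a lin_formula by auto
  then show ?thesis using dpos[OF a(1)] by (simp add: zero_le_mult_iff)
qed

lemma laurent_supp: "\<mu> \<in> laurent n \<Longrightarrow> \<forall>m. \<mu> m \<noteq> 0 \<longrightarrow> m \<in> zvec n"
  by (simp add: laurent_def)

lemma laurent_bound: "\<mu> \<in> laurent n \<Longrightarrow> \<exists>N\<ge>0. \<forall>s. \<mu> s \<noteq> 0 \<longrightarrow> (\<forall>i<n. - N \<le> s i)"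
proof -
  assume "\<mu> \<in> laurent n"
  then obtain N where N: "\<forall>s. \<mu> s \<noteq> 0 \<longrightarrow> (\<forall>i<n. - N \<le> s i)" by (auto simp: laurent_def)
  show ?thesis by (rule exI[of _ "\<bar>N\<bar>"]) (use N in force)
qed

lemma zs_laurent: assumes mu: "\<mu> \<in> laurent n" shows "zseries n q b \<mu> \<in> laurent n"
proof -
  note ms = laurent_supp[OF mu]
  obtain N where N: "N \<ge> 0" "\<forall>s. \<mu> s \<noteq> 0 \<longrightarrow> (\<forall>i<n. - N \<le> s i)" using laurent_bound[OF mu] by blast
  show ?thesis unfolding laurent_def
  proof (intro CollectI conjI allI impI exI)
    fix u assume "zseries n q b \<mu> u \<noteq> 0"
    then show "u \<in> zvec n" using zs_supp[OF ms] lin_zvec by auto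
  next
    fix u i assume u: "zseries n q b \<mu> u \<noteq> 0" and i: "i < n"
    then obtain m where "m \<in> zvec n" "u = lin m" "\<mu> m \<noteq> 0" using zs_supp[OF ms] by blast
    then show "- (N * M) \<le> u i" using lin_lb[OF N(1) _ i] N(2) by auto
  qed
qed

lemma zs_pseries: assumes mu: "\<mu> \<in> pseries n" shows "zseries n q b \<mu> \<in> pseries n"
proof -
  have ml: "\<mu> \<in> laurent n" using mu by (simp add: pseries_def)
  note ms = laurent_supp[OF ml]
  have "0 \<le> u i" if u: "zseries n q b \<mu> u \<noteq> 0" and i: "i < n" for u i
  proof -
    obtain m where "m \<in> zvec n" "u = lin m" "\<mu> m \<noteq> 0" using zs_supp[OF ms u] by blast
    then show ?thesis using lin_nonneg[OF _ i] mu by (auto simp: pseries_def)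
  qed
  then show ?thesis using zs_laurent[OF ml] by (auto simp: pseries_def)
qed

lemma zs_center:
  assumes mu: "\<forall>m. \<mu> m \<noteq> 0 \<longrightarrow> m \<in> zvec n" and A: "zseries n q b \<mu> \<in> A"
  shows "zseries n q b \<mu> \<in> qcenter n q A"
proof -
  have "\<forall>s. zseries n q b \<mu> s \<noteq> 0 \<longrightarrow> Wp n q s" using zs_supp[OF mu] Wlin by blast
  then show ?thesis using A C2 by (auto simp: qcenter_def)
qed

definition pre where
  "pre f = (\<lambda>m. if m \<in> zvec n then f (lin m) else 0)"

lemma pre_supp: "\<forall>m. pre f m \<noteq> 0 \<longrightarrow> m \<in> zvec n" by (simp add: pre_def)

lemma pre_zs:
  assumes A: "A \<subseteq> laurent n" and mA: "\<And>t. t \<in> zvec n \<Longrightarrow> (\<forall>i. 0 \<le> t i) \<Longrightarrow> mono t \<in> A"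
    and f: "f \<in> qcenter n q A"
  shows "zseries n q b (pre f) = f"
proof
  fix u
  show "zseries n q b (pre f) u = f u"
  proof (cases "\<exists>m\<in>zvec n. lin m = u")
    case True
    then obtain m where m: "m \<in> zvec n" "lin m = u" by blast
    then show ?thesis using zs1[OF pre_supp m(1)] by (simp add: pre_def)
  next
    case False
    have "f u = 0"
    proof (rule ccontr)
      assume "f u \<noteq> 0"
      then show False using C1[OF A mA f] lin_onto False by blast
    qed
    then show ?thesis using zs_b[OF pre_supp] False by simp
  qed
qed

lemma pre_laurent: assumes f: "f \<in> laurent n" shows "pre f \<in> laurent n"
proof -
  obtain N where N: "N \<ge> 0" "\<forall>s. f s \<noteq> 0 \<longrightarrow> (\<forall>i<n. - N \<le> s i)" using laurent_bound[OF f] by blast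
  show ?thesis unfolding laurent_def
  proof (intro CollectI conjI allI impI exI)
    fix m assume "pre f m \<noteq> 0" then show "m \<in> zvec n" using pre_supp by blast
  next
    fix m i assume m: "pre f m \<noteq> 0" and i: "i < n"
    then have "f (lin m) \<noteq> 0" by (auto simp: pre_def split: if_splits)
    then have "\<forall>j<n. -N \<le> lin m j" using N by blast
    then show "-N \<le> m i" using lin_lb_rev[OF N(1) _ i] by blast
  qed
qed

lemma pre_pseries: assumes f: "f \<in> pseries n" shows "pre f \<in> pseries n"
proof -
  have "0 \<le> m i" if m: "pre f m \<noteq> 0" and i: "i < n" for m i
  proof -
    have "f (lin m) \<noteq> 0" using m by (auto simp: pre_def split: if_splits)
    then have "\<forall>j<n. 0 \<le> lin m j" using f by (auto simp: pseries_def)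
    then show ?thesis using lin_nonneg_rev[OF _ i] by blast
  qed
  then show ?thesis using pre_laurent f by (auto simp: pseries_def)
qed

lemma zs_inj:
  assumes mu: "\<forall>m. \<mu> m \<noteq> 0 \<longrightarrow> m \<in> zvec n" and nu: "\<forall>m. \<nu> m \<noteq> 0 \<longrightarrow> m \<in> zvec n"
    and e: "zseries n q b \<mu> = zseries n q b \<nu>"
  shows "\<mu> = \<nu>"
proof
  fix m show "\<mu> m = \<nu> m"
  proof (cases "m \<in> zvec n")
    case True then show ?thesis using zs1[OF mu True] zs1[OF nu True] e by simp
  next
    case False then show ?thesis using mu nu by force
  qed
qed

lemma zs_add:
  assumes mu: "\<forall>m. \<mu> m \<noteq> 0 \<longrightarrow> m \<in> zvec n" and nu: "\<forall>m. \<nu> m \<noteq> 0 \<longrightarrow> m \<in> zvec n"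
  shows "zseries n q b (\<lambda>s. \<mu> s + \<nu> s) = (\<lambda>u. zseries n q b \<mu> u + zseries n q b \<nu> u)"
proof
  have sn: "\<forall>m. \<mu> m + \<nu> m \<noteq> 0 \<longrightarrow> m \<in> zvec n" using mu nu by force
  fix u
  show "zseries n q b (\<lambda>s. \<mu> s + \<nu> s) u = zseries n q b \<mu> u + zseries n q b \<nu> u"
  proof (cases "\<exists>m\<in>zvec n. lin m = u")
    case True
    then obtain m where m: "m \<in> zvec n" "lin m = u" by blast
    then show ?thesis using zs1[OF mu m(1)] zs1[OF nu m(1)] zs1[OF sn m(1)] by simp
  next
    case False
    then show ?thesis using zs_b[OF mu] zs_b[OF nu] zs_b[OF sn] by simp
  qed
qed

lemma zs_mult:
  assumes mu: "\<forall>m. \<mu> m \<noteq> 0 \<longrightarrow> m \<in> zvec n" and nu: "\<forall>m. \<nu> m \<noteq> 0 \<longrightarrow> m \<in> zvec n"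
  shows "zseries n q b (cmult n \<mu> \<nu>) = qmult n q (zseries n q b \<mu>) (zseries n q b \<nu>)"
proof
  have cs: "\<forall>m. cmult n \<mu> \<nu> m \<noteq> 0 \<longrightarrow> m \<in> zvec n" using cmult_supp[OF mu nu] by blast
  fix u
  let ?zm = "zseries n q b \<mu>" and ?zn = "zseries n q b \<nu>"
  let ?X = "{s. ?zm s \<noteq> 0 \<and> ?zn (u - s) \<noteq> 0}"
  show "zseries n q b (cmult n \<mu> \<nu>) u = qmult n q ?zm ?zn u"
  proof (cases "\<exists>m\<in>zvec n. lin m = u")
    case True
    then obtain m where m: "m \<in> zvec n" "lin m = u" by blast
    let ?Y = "{a. \<mu> a \<noteq> 0 \<and> \<nu> (m - a) \<noteq> 0}"
    have Yz: "a \<in> zvec n" "m - a \<in> zvec n" if "a \<in> ?Y" for a using that mu nu by auto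
    have "zseries n q b (cmult n \<mu> \<nu>) u = cmult n \<mu> \<nu> m" using zs1[OF cs m(1)] m(2) by simp
    also have "\<dots> = (\<Sum>a\<in>?Y. \<mu> a * \<nu> (m - a))" by (simp add: cmult_def qmult_def qeps_one)
    also have "\<dots> = (\<Sum>s\<in>?X. ?zm s * ?zn (u - s) * qeps n q s (u - s))"
    proof (rule sym, rule sum.reindex_cong[of lin])
      show "inj_on lin ?Y" using lin_inj by (rule inj_on_subset) (use Yz in blast)
      show "?X = lin ` ?Y"
      proof (rule equalityI)
        show "?X \<subseteq> lin ` ?Y"
        proof
          fix s assume s: "s \<in> ?X"
          then obtain a where a: "a \<in> zvec n" "s = lin a" "\<mu> a \<noteq> 0" using zs_supp[OF mu] by blast
          obtain c where c: "c \<in> zvec n" "u - s = lin c" "\<nu> c \<noteq> 0" using zs_supp[OF nu] s by blast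
          have "lin c = lin (m - a)" using c(2) a(2) m(2) lin_diff by simp
          then have "c = m - a" using lin_inj c(1) zvec_diff[OF m(1) a(1)] by (auto dest: inj_onD)
          then show "s \<in> lin ` ?Y" using a c by auto
        qed
      next
        show "lin ` ?Y \<subseteq> ?X"
        proof
          fix s assume "s \<in> lin ` ?Y"
          then obtain a where a: "a \<in> ?Y" "s = lin a" by blast
          have "u - s = lin (m - a)" using a(2) m(2) lin_diff by simp
          then show "s \<in> ?X" using a Yz[OF a(1)] zs1[OF mu] zs1[OF nu] by simp
        qed
      qed
      fix a assume a: "a \<in> ?Y"
      have "u - lin a = lin (m - a)" using m(2) lin_diff by simp
      then show "?zm (lin a) * ?zn (u - lin a) * qeps n q (lin a) (u - lin a) = \<mu> a * \<nu> (m - a)"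
        using Yz[OF a] zs1[OF mu] zs1[OF nu] Wp_qeps1[OF Wlin] by simp
    qed
    also have "\<dots> = qmult n q ?zm ?zn u" by (simp add: qmult_def)
    finally show ?thesis .
  next
    case False
    have X0: "?X = {}"
    proof (rule ccontr)
      assume "?X \<noteq> {}"
      then obtain s where s: "s \<in> ?X" by blast
      then obtain a where a: "a \<in> zvec n" "s = lin a" using zs_supp[OF mu] by blast
      obtain c where c: "c \<in> zvec n" "u - s = lin c" using zs_supp[OF nu] s by blast
      have "u = lin (a + c)" using a c lin_add by (simp add: algebra_simps)
      then show False using False zvec_add[OF a(1) c(1)] by blast
    qed
    have "qmult n q ?zm ?zn u = 0" unfolding qmult_def X0 by simp
    then show ?thesis using zs_b[OF cs] False by simp
  qed
qed

end


lemma comb: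
  fixes b :: "nat \<Rightarrow> nat \<Rightarrow> int" and D :: int
  assumes nonneg: "\<forall>i<n. \<forall>j<n. 0 \<le> b i j"
    and nz: "\<forall>i<n. \<exists>j<n. b i j \<noteq> 0"
    and D: "0 < D"
    and gen: "\<forall>j<n. \<exists>m. (\<forall>i<n. 0 \<le> m i) \<and> (\<forall>c<n. (\<Sum>i<n. m i * b i c) = (if c = j then D else 0))"
  shows "\<exists>\<pi>. \<pi> permutes {..<n} \<and> pos_diag n (\<lambda>i. b (\<pi> i))"
proof -
  have ex: "\<exists>i<n. (\<forall>c<n. c \<noteq> j \<longrightarrow> b i c = 0) \<and> 0 < b i j" if j: "j < n" for j
  proof -
    obtain m where m: "\<forall>i<n. 0 \<le> m i" "\<forall>c<n. (\<Sum>i<n. m i * b i c) = (if c = j then D else 0)"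
      using gen j by blast
    have "(\<Sum>i<n. m i * b i j) = D" using m(2) j by simp
    have "\<exists>i\<in>{..<n}. m i * b i j \<noteq> 0"
    proof (rule ccontr)
      assume "\<not> (\<exists>i\<in>{..<n}. m i * b i j \<noteq> 0)"
      then have "(\<Sum>i<n. m i * b i j) = 0" by (intro sum.neutral) blast
      with \<open>(\<Sum>i<n. m i * b i j) = D\<close> D show False by simp
    qed
    then obtain i where i: "i < n" "m i * b i j \<noteq> 0" by blast
    then have "m i \<noteq> 0" by auto
    moreover have "0 \<le> m i" using m(1) i(1) by blast
    ultimately have mi: "0 < m i" by linarith
    have z: "b i c = 0" if c: "c < n" "c \<noteq> j" for c
    proof -
      have "(\<Sum>i<n. m i * b i c) = 0" using m(2) c by simp
      moreover have "\<forall>i'\<in>{..<n}. 0 \<le> m i' * b i' c" using m(1) nonneg c by auto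
      moreover have "(\<Sum>i<n. m i * b i c) = 0 \<longleftrightarrow> (\<forall>i'\<in>{..<n}. m i' * b i' c = 0)"
        by (rule sum_nonneg_eq_0_iff) (use calculation in auto)
      ultimately have "\<forall>i'\<in>{..<n}. m i' * b i' c = 0" by simp
      then have "m i * b i c = 0" using i by auto
      then show ?thesis using mi by simp
    qed
    obtain c where c: "c < n" "b i c \<noteq> 0" using nz i by blast
    have "c = j" by (rule ccontr) (use z c in auto)
    moreover have "0 \<le> b i j" using nonneg i j by blast
    ultimately have "0 < b i j" using c by auto
    then show ?thesis using z i by blast
  qed
  then have "\<forall>j. \<exists>i. j < n \<longrightarrow> i < n \<and> (\<forall>c<n. c \<noteq> j \<longrightarrow> b i c = 0) \<and> 0 < b i j" by blast
  from choice[OF this] obtain f where f0: "\<forall>j. j < n \<longrightarrow> f j < n \<and> (\<forall>c<n. c \<noteq> j \<longrightarrow> b (f j) c = 0) \<and> 0 < b (f j) j"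
    by blast
  then have f: "\<forall>j<n. f j < n \<and> (\<forall>c<n. c \<noteq> j \<longrightarrow> b (f j) c = 0) \<and> 0 < b (f j) j" by blast
  define \<pi> where "\<pi> i = (if i < n then f i else i)" for i
  have inj: "inj_on \<pi> {..<n}"
  proof (rule inj_onI)
    fix x y assume x: "x \<in> {..<n}" and y: "y \<in> {..<n}" and e: "\<pi> x = \<pi> y"
    then have "f x = f y" by (simp add: \<pi>_def)
    show "x = y"
    proof (rule ccontr)
      assume "x \<noteq> y"
      then have "b (f y) x = 0" using f x y by auto
      moreover have "0 < b (f x) x" using f x by auto
      ultimately show False using \<open>f x = f y\<close> by simp
    qed
  qed
  have sub: "\<pi> ` {..<n} \<subseteq> {..<n}" using f by (auto simp: \<pi>_def)
  have "\<pi> ` {..<n} = {..<n}" using endo_inj_surj[OF _ sub inj] by simp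
  then have "bij_betw \<pi> {..<n} {..<n}" using inj by (simp add: bij_betw_def)
  then have "\<pi> permutes {..<n}" by (rule bij_imp_permutes) (simp add: \<pi>_def)
  moreover have "pos_diag n (\<lambda>i. b (\<pi> i))" using f by (auto simp: pos_diag_def \<pi>_def)
  ultimately show ?thesis by blast
qed

context qs
begin

lemma lb: "\<mu> \<in> laurent n \<Longrightarrow> \<exists>N\<ge>0. \<forall>s. \<mu> s \<noteq> 0 \<longrightarrow> (\<forall>i<n. - N \<le> s i)"
proof -
  assume "\<mu> \<in> laurent n"
  then obtain N where N: "\<forall>s. \<mu> s \<noteq> 0 \<longrightarrow> (\<forall>i<n. - N \<le> s i)" by (auto simp: laurent_def)
  show ?thesis by (rule exI[of _ "\<bar>N\<bar>"]) (use N in force)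
qed

definition ev :: "nat \<Rightarrow> int \<Rightarrow> (nat \<Rightarrow> int)" where "ev i k = (\<lambda>c. if c = i then k else 0)"

lemma ev_zvec: "i < n \<Longrightarrow> ev i k \<in> zvec n" by (simp add: ev_def zvec_def)
lemma lin_ev: "i < n \<Longrightarrow> lin (ev i k) = (\<lambda>j. k * b i j)" unfolding ev_def by (rule lin_e)

lemma lin_zero: "lin (\<lambda>_. 0) = (\<lambda>_. 0)" by (simp add: plin_def fun_eq_iff)

lemma b_nz: assumes i: "i < n" shows "\<exists>j<n. b i j \<noteq> 0"
proof (rule ccontr)
  assume "\<not> ?thesis"
  then have "\<forall>j. b i j = 0" using bz[OF i] by (auto simp: zvec_def not_less)
  then have "lin (ev i 1) = lin (\<lambda>_. 0)" using lin_ev[OF i] lin_zero by simp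
  moreover have "(\<lambda>_. 0) \<in> zvec n" by (simp add: zvec_def)
  ultimately have "ev i 1 = (\<lambda>_. 0)" using lin_inj ev_zvec[OF i] by (auto dest: inj_onD)
  then show False by (metis ev_def zero_neq_one)
qed

lemma zs_nz: "\<forall>m. \<mu> m \<noteq> 0 \<longrightarrow> m \<in> zvec n \<Longrightarrow> zseries n q b \<mu> u \<noteq> 0 \<Longrightarrow> \<exists>m\<in>zvec n. lin m = u \<and> \<mu> m \<noteq> 0"
proof -
  assume mu: "\<forall>m. \<mu> m \<noteq> 0 \<longrightarrow> m \<in> zvec n" and u: "zseries n q b \<mu> u \<noteq> 0"
  obtain m where m: "m \<in> zvec n" "lin m = u" using zs_b[OF mu] u by blast
  then show ?thesis using zs_a[OF mu m(1)] u by auto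
qed

lemma F1L:
  assumes img: "zseries n q b ` laurent n \<subseteq> qcenter n q (laurent n)" and i: "i < n" and j: "j < n"
  shows "0 \<le> b i j"
proof (rule ccontr)
  assume neg: "\<not> 0 \<le> b i j"
  define \<mu> where "\<mu> = (\<lambda>m. if m \<in> zvec n \<and> (\<forall>c. c \<noteq> i \<longrightarrow> m c = 0) \<and> 0 \<le> m i then 1 else (0::'k))"
  have "\<mu> \<in> laurent n" unfolding laurent_def
  proof (intro CollectI conjI allI impI exI)
    fix m assume "\<mu> m \<noteq> 0" then show "m \<in> zvec n" by (simp add: \<mu>_def split: if_splits)
  next
    fix m c assume "\<mu> m \<noteq> 0" "c < n"
    then show "-0 \<le> m c" by (cases "c = i") (auto simp: \<mu>_def split: if_splits)
  qed
  then have "zseries n q b \<mu> \<in> laurent n" using img by (auto simp: qcenter_def)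
  then obtain N where N: "N \<ge> 0" "\<forall>s. zseries n q b \<mu> s \<noteq> 0 \<longrightarrow> (\<forall>i<n. - N \<le> s i)" using lb by blast
  define k where "k = N + 1"
  have ms: "\<forall>m. \<mu> m \<noteq> 0 \<longrightarrow> m \<in> zvec n" by (simp add: \<mu>_def)
  have "\<mu> (ev i k) = 1" using ev_zvec[OF i] N(1) by (simp add: \<mu>_def k_def ev_def)
  then have "zseries n q b \<mu> (lin (ev i k)) \<noteq> 0" using zs_a[OF ms ev_zvec[OF i]] zprod_eq(2) by simp
  then have "-N \<le> k * b i j" using N(2) j lin_ev[OF i] by auto
  moreover have "k * b i j \<le> k * (-1)" using neg N(1) by (intro mult_left_mono) (auto simp: k_def)
  ultimately show False by (simp add: k_def)
qed

lemma F1P: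
  assumes img: "zseries n q b ` pseries n \<subseteq> qcenter n q (pseries n)" and i: "i < n" and j: "j < n"
  shows "0 \<le> b i j"
proof -
  define \<mu> where "\<mu> = (mono (ev i 1) :: (nat \<Rightarrow> int) \<Rightarrow> 'k)"
  have "\<mu> \<in> pseries n" unfolding \<mu>_def by (rule mono_laurent[OF ev_zvec[OF i]]) (auto simp: ev_def)
  then have "zseries n q b \<mu> \<in> pseries n" using img by (auto simp: qcenter_def)
  moreover have ms: "\<forall>m. \<mu> m \<noteq> 0 \<longrightarrow> m \<in> zvec n" using ev_zvec[OF i] by (simp add: \<mu>_def mono_def)
  have "zseries n q b \<mu> (lin (ev i 1)) \<noteq> 0" using zs_a[OF ms ev_zvec[OF i]] zprod_eq(2) by (simp add: \<mu>_def mono_def)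
  ultimately have "0 \<le> lin (ev i 1) j" using j by (auto simp: pseries_def)
  then show ?thesis using lin_ev[OF i] by simp
qed

lemma WD:
  assumes D: "\<forall>i<n. \<forall>j<n. q i j ^ D = 1" and s: "\<forall>a<n. int D dvd s a"
  shows "Wp n q s"
  unfolding Wp_def
proof (intro allI impI conjI)
  fix a c assume a: "a < n" and c: "c < n"
  obtain z where z: "s a = int D * z" using s a by (auto elim: dvdE)
  show "q a c powi s a = 1" using D a c by (simp add: z power_int_mult)
  show "q c a powi s a = 1" using D a c by (simp add: z power_int_mult)
qed

lemma F2L:
  assumes surj: "qcenter n q (laurent n) \<subseteq> zseries n q b ` laurent n" and j: "j < n"
    and D: "0 < D" "\<forall>i<n. \<forall>j<n. q i j ^ D = 1"
  shows "\<exists>m\<in>zvec n. (\<forall>i<n. 0 \<le> m i) \<and> lin m = ev j (int D)"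
proof -
  define f where "f = (\<lambda>u. if \<exists>k\<ge>0. u = ev j (k * int D) then 1 else (0::'k))"
  have fL: "f \<in> laurent n" unfolding laurent_def
  proof (intro CollectI conjI allI impI exI)
    fix u assume "f u \<noteq> 0" then show "u \<in> zvec n" using ev_zvec[OF j] by (auto simp: f_def split: if_splits)
  next
    fix u c assume "f u \<noteq> 0" "c < n"
    then show "-0 \<le> u c" by (auto simp: f_def ev_def split: if_splits)
  qed
  have "\<forall>s. f s \<noteq> 0 \<longrightarrow> Wp n q s"
  proof (intro allI impI)
    fix s assume "f s \<noteq> 0"
    then obtain k where "s = ev j (k * int D)" by (auto simp: f_def split: if_splits)
    then have "\<forall>a<n. int D dvd s a" by (auto simp: ev_def)
    then show "Wp n q s" by (rule WD[OF D(2)])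
  qed
  then have "f \<in> qcenter n q (laurent n)" using fL C2 by (auto simp: qcenter_def)
  then obtain \<mu> where mu: "\<mu> \<in> laurent n" "zseries n q b \<mu> = f" using surj by blast
  have ms: "\<forall>m. \<mu> m \<noteq> 0 \<longrightarrow> m \<in> zvec n" using mu(1) by (simp add: laurent_def)
  have "f (ev j (1 * int D)) = 1" unfolding f_def by (metis zero_less_one order_less_le)
  then obtain m where m: "m \<in> zvec n" "lin m = ev j (int D)" using zs_nz[OF ms, of "ev j (int D)"] mu(2) by auto
  obtain N where N: "N \<ge> 0" "\<forall>s. \<mu> s \<noteq> 0 \<longrightarrow> (\<forall>i<n. - N \<le> s i)" using lb[OF mu(1)] by blast
  have "0 \<le> m i" if i: "i < n" for i
  proof (rule ccontr)
    assume neg: "\<not> 0 \<le> m i"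
    define k where "k = N + 1"
    have k0: "k \<ge> 0" using N(1) by (simp add: k_def)
    have km: "(\<lambda>i. k * m i) \<in> zvec n" using zvec_smult[OF m(1)] .
    have lk: "lin (\<lambda>i. k * m i) = ev j (k * int D)" using lin_smult m(2) by (auto simp: ev_def fun_eq_iff)
    have "f (ev j (k * int D)) = 1" using k0 unfolding f_def by auto
    then have "\<mu> (\<lambda>i. k * m i) * zc (\<lambda>i. k * m i) = 1" using zs_a[OF ms km] lk mu(2) by simp
    then have "\<mu> (\<lambda>i. k * m i) \<noteq> 0" by auto
    then have "-N \<le> k * m i" using N(2) i by auto
    moreover have "k * m i \<le> k * (-1)" using neg k0 by (intro mult_left_mono) auto
    ultimately show False by (simp add: k_def)
  qed
  then show ?thesis using m by blast
qed

lemma F2P: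
  assumes surj: "qcenter n q (pseries n) \<subseteq> zseries n q b ` pseries n" and j: "j < n"
    and D: "0 < D" "\<forall>i<n. \<forall>j<n. q i j ^ D = 1"
  shows "\<exists>m\<in>zvec n. (\<forall>i<n. 0 \<le> m i) \<and> lin m = ev j (int D)"
proof -
  define f where "f = (mono (ev j (int D)) :: (nat \<Rightarrow> int) \<Rightarrow> 'k)"
  have fP: "f \<in> pseries n" unfolding f_def by (rule mono_laurent[OF ev_zvec[OF j]]) (auto simp: ev_def)
  have "\<forall>s. f s \<noteq> 0 \<longrightarrow> Wp n q s"
  proof (intro allI impI)
    fix s assume "f s \<noteq> 0"
    then have "s = ev j (int D)" by (auto simp: f_def mono_def split: if_splits)
    then have "\<forall>a<n. int D dvd s a" by (auto simp: ev_def)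
    then show "Wp n q s" by (rule WD[OF D(2)])
  qed
  then have "f \<in> qcenter n q (pseries n)" using fP C2 by (auto simp: qcenter_def)
  then obtain \<mu> where mu: "\<mu> \<in> pseries n" "zseries n q b \<mu> = f" using surj by blast
  have ms: "\<forall>m. \<mu> m \<noteq> 0 \<longrightarrow> m \<in> zvec n" using mu(1) by (simp add: laurent_def pseries_def)
  have "f (ev j (int D)) = 1" unfolding f_def by (simp add: mono_def)
  then obtain m where m: "m \<in> zvec n" "lin m = ev j (int D)" "\<mu> m \<noteq> 0" using zs_nz[OF ms, of "ev j (int D)"] mu(2) by auto
  then have "\<forall>i<n. 0 \<le> m i" using mu(1) by (auto simp: pseries_def)
  then show ?thesis using m by blast
qed

lemma converse_comb:
  assumes nonneg: "\<forall>i<n. \<forall>j<n. 0 \<le> b i j" and D: "0 < D"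
    and gen: "\<forall>j<n. \<exists>m\<in>zvec n. (\<forall>i<n. 0 \<le> m i) \<and> lin m = ev j (int D)"
  shows "\<exists>\<pi>. \<pi> permutes {..<n} \<and> pos_diag n (\<lambda>i. b (\<pi> i))"
proof (rule comb[OF nonneg _ _])
  show "\<forall>i<n. \<exists>j<n. b i j \<noteq> 0" using b_nz by blast
  show "0 < int D" using D by simp
  show "\<forall>j<n. \<exists>m. (\<forall>i<n. 0 \<le> m i) \<and> (\<forall>c<n. (\<Sum>i<n. m i * b i c) = (if c = j then int D else 0))"
  proof (intro allI impI)
    fix j assume "j < n"
    then obtain m where "(\<forall>i<n. 0 \<le> m i)" "lin m = ev j (int D)" using gen by blast
    then show "\<exists>m. (\<forall>i<n. 0 \<le> m i) \<and> (\<forall>c<n. (\<Sum>i<n. m i * b i c) = (if c = j then int D else 0))"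
      by (intro exI[of _ m]) (auto simp: plin_def ev_def fun_eq_iff)
  qed
qed

end


theorem theorem3p4:
  fixes n :: nat and q :: "nat \<Rightarrow> nat \<Rightarrow> 'k::alg_closed_field"
    and b :: "nat \<Rightarrow> nat \<Rightarrow> int"
  assumes n_pos: "0 < n"
    and q_nz: "\<forall>i<n. \<forall>j<n. q i j \<noteq> 0"
    and q_diag: "\<forall>i<n. q i i = 1"
    and q_inv: "\<forall>i<n. \<forall>j<n. q i j = inverse (q j i)"
    and q_roots: "\<forall>i<n. \<forall>j<n. \<exists>d::nat. 0 < d \<and> q i j ^ d = 1"
    and basis: "is_Zbasis n q b"
  shows "((\<exists>\<pi>. \<pi> permutes {..<n} \<and> pos_diag n (\<lambda>i. b (\<pi> i)))
           \<longleftrightarrow> (bij_betw (zseries n q b) (laurent n) (qcenter n q (laurent n))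
                \<and> (\<forall>\<mu>\<in>laurent n. \<forall>\<nu>\<in>laurent n.
                     zseries n q b (\<lambda>s. \<mu> s + \<nu> s) = (\<lambda>u. zseries n q b \<mu> u + zseries n q b \<nu> u)
                   \<and> zseries n q b (cmult n \<mu> \<nu>) = qmult n q (zseries n q b \<mu>) (zseries n q b \<nu>))))
       \<and> ((\<exists>\<pi>. \<pi> permutes {..<n} \<and> pos_diag n (\<lambda>i. b (\<pi> i)))
           \<longleftrightarrow> (bij_betw (zseries n q b) (pseries n) (qcenter n q (pseries n))
                \<and> (\<forall>\<mu>\<in>pseries n. \<forall>\<nu>\<in>pseries n.
                     zseries n q b (\<lambda>s. \<mu> s + \<nu> s) = (\<lambda>u. zseries n q b \<mu> u + zseries n q b \<nu> u)
                   \<and> zseries n q b (cmult n \<mu> \<nu>) = qmult n q (zseries n q b \<mu>) (zseries n q b \<nu>))))"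
proof -
  interpret qs n q b using q_nz q_diag q_inv basis by unfold_locales
  obtain D where D: "0 < D" "\<forall>i<n. \<forall>j<n. q i j ^ D = 1"
  proof -
    have "\<forall>p. \<exists>d. fst p < n \<and> snd p < n \<longrightarrow> 0 < d \<and> q (fst p) (snd p) ^ d = 1" using q_roots by auto
    from choice[OF this] obtain g where g: "\<forall>p. fst p < n \<and> snd p < n \<longrightarrow> 0 < g p \<and> q (fst p) (snd p) ^ g p = 1"
      by blast
    define D where "D = (\<Prod>i<n. \<Prod>j<n. g (i, j))"
    have "0 < D" unfolding D_def using g by (auto intro!: prod_pos)
    moreover have "q i j ^ D = 1" if i: "i < n" and j: "j < n" for i j
    proof -
      have "g (i, j) dvd (\<Prod>j<n. g (i, j))" using j by (intro dvd_prodI) auto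
      also have "\<dots> dvd D" unfolding D_def using i by (intro dvd_prodI) auto
      finally obtain k where k: "D = g (i, j) * k" by (auto elim: dvdE)
      have "q i j ^ g (i, j) = 1" using g i j by auto
      then show ?thesis by (simp add: k power_mult)
    qed
    ultimately show thesis using that by blast
  qed
  let ?P = "\<exists>\<pi>. \<pi> permutes {..<n} \<and> pos_diag n (\<lambda>i. b (\<pi> i))"
  have mA: "\<And>t. t \<in> zvec n \<Longrightarrow> (\<forall>i. 0 \<le> t i) \<Longrightarrow> mono t \<in> laurent n"
    using mono_laurent pseries_laurent by blast
  have mP: "\<And>t. t \<in> zvec n \<Longrightarrow> (\<forall>i. 0 \<le> t i) \<Longrightarrow> mono t \<in> pseries n"
    using mono_laurent by blast
  have fwd: "(bij_betw (zseries n q b) (laurent n) (qcenter n q (laurent n))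
                \<and> (\<forall>\<mu>\<in>laurent n. \<forall>\<nu>\<in>laurent n.
                     zseries n q b (\<lambda>s. \<mu> s + \<nu> s) = (\<lambda>u. zseries n q b \<mu> u + zseries n q b \<nu> u)
                   \<and> zseries n q b (cmult n \<mu> \<nu>) = qmult n q (zseries n q b \<mu>) (zseries n q b \<nu>)))
       \<and> (bij_betw (zseries n q b) (pseries n) (qcenter n q (pseries n))
                \<and> (\<forall>\<mu>\<in>pseries n. \<forall>\<nu>\<in>pseries n.
                     zseries n q b (\<lambda>s. \<mu> s + \<nu> s) = (\<lambda>u. zseries n q b \<mu> u + zseries n q b \<nu> u)
                   \<and> zseries n q b (cmult n \<mu> \<nu>) = qmult n q (zseries n q b \<mu>) (zseries n q b \<nu>)))"
    if P: ?P
  proof -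
    obtain \<pi> where \<pi>: "\<pi> permutes {..<n}" "pos_diag n (\<lambda>i. b (\<pi> i))" using P by blast
    interpret qsd n q b \<pi> using \<pi> by unfold_locales
    have PL: "\<And>\<mu>. \<mu> \<in> pseries n \<Longrightarrow> \<mu> \<in> laurent n" using pseries_laurent by blast
    have bL: "bij_betw (zseries n q b) (laurent n) (qcenter n q (laurent n))"
      unfolding bij_betw_def
    proof
      show "inj_on (zseries n q b) (laurent n)"
        by (rule inj_onI) (rule zs_inj[OF laurent_supp laurent_supp])
      show "zseries n q b ` laurent n = qcenter n q (laurent n)"
      proof (rule equalityI)
        show "zseries n q b ` laurent n \<subseteq> qcenter n q (laurent n)"
          using zs_center[OF laurent_supp zs_laurent] by blast
        show "qcenter n q (laurent n) \<subseteq> zseries n q b ` laurent n"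
        proof
          fix f assume f: "f \<in> qcenter n q (laurent n)"
          then have "f \<in> laurent n" by (simp add: qcenter_def)
          then have "pre f \<in> laurent n" by (rule pre_laurent)
          moreover have "zseries n q b (pre f) = f" by (rule pre_zs[OF _ mA f]) simp_all
          ultimately show "f \<in> zseries n q b ` laurent n" by (metis image_eqI)
        qed
      qed
    qed
    have bP: "bij_betw (zseries n q b) (pseries n) (qcenter n q (pseries n))"
      unfolding bij_betw_def
    proof
      show "inj_on (zseries n q b) (pseries n)"
        by (rule inj_onI) (rule zs_inj[OF laurent_supp[OF PL] laurent_supp[OF PL]])
      show "zseries n q b ` pseries n = qcenter n q (pseries n)"
      proof (rule equalityI)
        show "zseries n q b ` pseries n \<subseteq> qcenter n q (pseries n)"
          using zs_center[OF laurent_supp[OF PL] zs_pseries] by blast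
        show "qcenter n q (pseries n) \<subseteq> zseries n q b ` pseries n"
        proof
          fix f assume f: "f \<in> qcenter n q (pseries n)"
          then have "f \<in> pseries n" by (simp add: qcenter_def)
          then have "pre f \<in> pseries n" by (rule pre_pseries)
          moreover have "zseries n q b (pre f) = f" by (rule pre_zs[OF pseries_laurent mP f])
          ultimately show "f \<in> zseries n q b ` pseries n" by (metis image_eqI)
        qed
      qed
    qed
    show ?thesis
      using bL bP zs_add[OF laurent_supp laurent_supp] zs_mult[OF laurent_supp laurent_supp]
        zs_add[OF laurent_supp[OF PL] laurent_supp[OF PL]] zs_mult[OF laurent_supp[OF PL] laurent_supp[OF PL]]
      by blast
  qed
  have bwdL: ?P if "bij_betw (zseries n q b) (laurent n) (qcenter n q (laurent n))"
  proof -
    have im: "zseries n q b ` laurent n = qcenter n q (laurent n)" using that by (simp add: bij_betw_def)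
    show ?thesis
    proof (rule converse_comb[OF _ D(1)])
      show "\<forall>i<n. \<forall>j<n. 0 \<le> b i j" using F1L im by auto
      show "\<forall>j<n. \<exists>m\<in>zvec n. (\<forall>i<n. 0 \<le> m i) \<and> lin m = ev j (int D)" using F2L[OF _ _ D] im by auto
    qed
  qed
  have bwdP: ?P if "bij_betw (zseries n q b) (pseries n) (qcenter n q (pseries n))"
  proof -
    have im: "zseries n q b ` pseries n = qcenter n q (pseries n)" using that by (simp add: bij_betw_def)
    show ?thesis
    proof (rule converse_comb[OF _ D(1)])
      show "\<forall>i<n. \<forall>j<n. 0 \<le> b i j" using F1P im by auto
      show "\<forall>j<n. \<exists>m\<in>zvec n. (\<forall>i<n. 0 \<le> m i) \<and> lin m = ev j (int D)" using F2P[OF _ _ D] im by auto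
    qed
  qed
  show ?thesis using fwd bwdL bwdP by blast
qed


end
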